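(* Let $m\ge n$, $B\in\mathbb R^{n\times m}$ of full row rank, $f:\mathbb R^m\to\mathbb R$ and $h:\mathbb R^n\to\mathbb R$ convex and continuously differentiable with Lipschitz gradients, $\mathcal L(u,p)=f(u)-h(p)+(Bu,p)$, and $(u^*,p^* )$ a saddle point of $\mathcal L$. Let $T_{\mathcal U},\mathcal I_{\mathcal V}$ ($m\times m$) and $T_{\mathcal P},\mathcal I_{\mathcal Q}$ ($n\times n$) be symmetric positive definite. Suppose $h\in\mathcal S^{1,1}_{\mu_{h,T_{\mathcal P}},L_{h,T_{\mathcal P}}}$ w.r.t. $T_{\mathcal P}$ with $L_{h,T_{\mathcal P}}\le1$, $f\in\mathcal S^{1,1}_{\mu_{f,T_{\mathcal U}},L_{f,T_{\mathcal U}}}$ w.r.t. $T_{\mathcal U}$ with $L_{f,T_{\mathcal U}}\le1$, and $f_B$ is strongly convex w.r.t. $\mathcal I_{\mathcal V}$ with constant $\mu_{f_B,\mathcal I_{\mathcal V}}>0$. Define the symmetric TPD field $\mathcal G=(\mathcal G^u,\mathcal G^p)$, $$\mathcal G^u(u,p)=-\mathcal I_{\mathcal V}^{-1}\big(\partial_u\mathcal L(u,p)+B^\top T_{\mathcal P}^{-1}\partial_p\mathcal L(u,p)\big),\qquad \mathcal G^p(u,p)=\mathcal I_{\mathcal Q}^{-1}\big(\partial_p\mathcal L(u,p)-BT_{\mathcal U}^{-1}\partial_u\mathcal L(u,p)\big),$$ and $\mathcal E(u,p)=\frac12\|u-u^*\|^2_{\mathcal I_{\mathcal V}}+\frac12\|p-p^*\|^2_{\mathcal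 I_{\mathcal Q}}$. Then for all $(u,p)$, $$-\nabla\mathcal E(u,p)\cdot\mathcal G(u,p)\ge\mu\,\mathcal E(u,p)+\frac{\mu_{f,T_{\mathcal U}}}{2}\|v-v^*\|^2_{T_{\mathcal U}}+\frac{\mu_{h,T_{\mathcal P}}}{2}\|q-q^*\|^2_{T_{\mathcal P}},$$ where $0<\mu=\min\{\mu_{f_B,\mathcal I_{\mathcal V}},\mu_{h_B,\mathcal I_{\mathcal Q}}\}$. Consequently, if $(u(t),p(t))$ solves $u'=\mathcal G^u(u,p)$, $p'=\mathcal G^p(u,p)$, then $\mathcal E(u(t),p(t))\le e^{-\mu t}\mathcal E(u(0),p(0))$ for all $t>0$.
   Context: $\partial_u\mathcal L(u,p)=\nabla f(u)+B^\top p$, $\partial_p\mathcal L(u,p)=Bu-\nabla h(p)$; a saddle point satisfies $\partial_u\mathcal L(u^*,p^* )=0$, $\partial_p\mathcal L(u^*,p^* )=0$. For SPD $M$, $\|x\|_M=(Mx,x)^{1/2}$; $D_g(y,x)=g(y)-g(x)-(\nabla g(x),y-x)$; $g\in\mathcal S^{1,1}_{\mu_{g,M},L_{g,M}}$ w.r.t. $M$ means $\frac{\mu_{g,M}}2\|x-y\|_M^2\le D_g(y,x)\le\frac{L_{g,M}}2\|x-y\|_M^2$ for all $x,y$ ($\mu_{g,M}\ge0$); strong convexity with constant $\mu_{g,M}$ means the lower bound holds. Define $f_B(u)=f(u)+\frac12(B^\top T_{\mathcal P}^{-1}Bu,u)$, $h_B(p)=h(p)+\frac12(BT_{\mathcal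 U}^{-1}B^\top p,p)$ with strong convexity constant $\mu_{h_B,\mathcal I_{\mathcal Q}}$ w.r.t. $\mathcal I_{\mathcal Q}$; $v=u+T_{\mathcal U}^{-1}B^\top p$, $q=p-T_{\mathcal P}^{-1}Bu$, and $v^*,q^*$ the same expressions at $(u^*,p^* )$. $\nabla\mathcal E\cdot\mathcal G$ means $(\mathcal I_{\mathcal V}(u-u^* ),\mathcal G^u)+(\mathcal I_{\mathcal Q}(p-p^* ),\mathcal G^p)$. *)

theory Defs
  imports "HOL-Analysis.Analysis"
begin

definition spd :: "real^'k^'k \<Rightarrow> bool" where
  "spd M \<longleftrightarrow> transpose M = M \<and> (\<forall>x. x \<noteq> 0 \<longrightarrow> x \<bullet> (M *v x) > 0)"

definition mnorm :: "real^'k^'k \<Rightarrow> real^'k \<Rightarrow> real" where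
  "mnorm M x = sqrt ((M *v x) \<bullet> x)"

definition bregman :: "(real^'k \<Rightarrow> real) \<Rightarrow> (real^'k \<Rightarrow> real^'k) \<Rightarrow> real^'k \<Rightarrow> real^'k \<Rightarrow> real" where
  "bregman g gg y x = g y - g x - gg x \<bullet> (y - x)"

definition S11 :: "(real^'k \<Rightarrow> real) \<Rightarrow> (real^'k \<Rightarrow> real^'k) \<Rightarrow> real^'k^'k \<Rightarrow> real \<Rightarrow> real \<Rightarrow> bool" where
  "S11 g gg M \<mu> L \<longleftrightarrow> \<mu> \<ge> 0 \<and>
     (\<forall>x y. \<mu> / 2 * (mnorm M (x - y))\<^sup>2 \<le> bregman g gg y x \<and>
            bregman g gg y x \<le> L / 2 * (mnorm M (x - y))\<^sup>2)"

definition strongly_convex_wrt :: "(real^'k \<Rightarrow> real) \<Rightarrow> (real^'k \<Rightarrow> real^'k) \<Rightarrow> real^'k^'k \<Rightarrow> real \<Rightarrow> bool" where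
  "strongly_convex_wrt g gg M \<mu> \<longleftrightarrow>
     (\<forall>x y. \<mu> / 2 * (mnorm M (x - y))\<^sup>2 \<le> bregman g gg y x)"

definition sc_const :: "(real^'k \<Rightarrow> real) \<Rightarrow> (real^'k \<Rightarrow> real^'k) \<Rightarrow> real^'k^'k \<Rightarrow> real" where
  "sc_const g gg M = Sup {c. strongly_convex_wrt g gg M c}"

end

theory Submission
  imports Defs
begin

lemma inner_mat_left: "(A *v x) \<bullet> (y::real^'n) = x \<bullet> (transpose A *v y)"
  for A :: "real^'m^'n"
  by (metis dot_lmul_matrix vector_transpose_matrix)

lemma spd_inner_sym: "spd M \<Longrightarrow> (M *v x) \<bullet> y = x \<bullet> (M *v y)"
  unfolding spd_def by (metis inner_mat_left)

lemma spd_nonneg: "spd M \<Longrightarrow> 0 \<le> (M *v x) \<bullet> x"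
  unfolding spd_def by (metis inner_commute inner_zero_left less_eq_real_def matrix_vector_mult_0_right)

lemma spd_pos: "spd M \<Longrightarrow> x \<noteq> 0 \<Longrightarrow> 0 < (M *v x) \<bullet> x"
  unfolding spd_def by (metis inner_commute)

lemma mnorm_sq: "spd M \<Longrightarrow> (mnorm M x)\<^sup>2 = (M *v x) \<bullet> x"
  unfolding mnorm_def using spd_nonneg by simp

lemma spd_invertible: assumes "spd M" shows "invertible M"
proof -
  have "inj ((*v) M)"
  proof (rule injI)
    fix x y assume "M *v x = M *v y"
    then have "M *v (x - y) = 0" by (simp add: matrix_vector_mult_diff_distrib)
    then show "x = y" using spd_pos[OF assms, of "x - y"] by auto
  qed
  then show ?thesis using matrix_left_invertible_injective invertible_left_inverse by blast
qed

lemma spd_inv: assumes "spd M"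
  shows "M ** matrix_inv M = mat 1" "matrix_inv M ** M = mat 1"
proof -
  have "\<exists>A'. M ** A' = mat 1 \<and> A' ** M = mat 1" using spd_invertible[OF assms] unfolding invertible_def .
  then have "M ** matrix_inv M = mat 1 \<and> matrix_inv M ** M = mat 1"
    unfolding matrix_inv_def by (rule someI_ex)
  then show "M ** matrix_inv M = mat 1" "matrix_inv M ** M = mat 1" by auto
qed

lemma spd_inv_vec: assumes "spd M"
  shows "M *v (matrix_inv M *v x) = x" "matrix_inv M *v (M *v x) = x"
  using spd_inv[OF assms] by (simp_all add: matrix_vector_mul_assoc)

lemma spd_inv_sym: assumes "spd M" shows "transpose (matrix_inv M) = matrix_inv M"
proof -
  let ?I = "matrix_inv M"
  have t: "transpose M = M" using assms spd_def by blast
  have "transpose ?I ** M = mat 1"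
    by (metis spd_inv(1)[OF assms] matrix_transpose_mul t transpose_mat)
  then have "?I = (transpose ?I ** M) ** ?I" by simp
  also have "\<dots> = transpose ?I" by (metis matrix_mul_assoc spd_inv(1)[OF assms] matrix_mul_rid)
  finally show ?thesis by simp
qed

lemma spd_inv_inner_sym: "spd M \<Longrightarrow> (matrix_inv M *v x) \<bullet> y = x \<bullet> (matrix_inv M *v y)"
  by (metis inner_mat_left spd_inv_sym)

lemma spd_cancel: "spd M \<Longrightarrow> (M *v x) \<bullet> (matrix_inv M *v y) = x \<bullet> y"
  by (simp add: spd_inner_sym spd_inv_vec)

lemma bregman_sym: "bregman g gg y x + bregman g gg x y = (gg y - gg x) \<bullet> (y - x)"
  unfolding bregman_def by (simp add: algebra_simps inner_diff_left inner_diff_right)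

lemma mvec_neg: "(A::real^'n^'m) *v (- z) = - (A *v z)"
  using matrix_vector_mult_diff_distrib[of A 0 z] by simp

lemma key_part:
  assumes M: "spd M" and S: "S11 g gg M \<mu> L" and L1: "L \<le> 1"
  shows "\<mu>/2 * ((M *v (u - w + s)) \<bullet> (u - w + s))
     \<le> 1/2 * ((gg u - gg w) \<bullet> (u - w)) + (gg u - gg w) \<bullet> s + 1/2 * ((M *v s) \<bullet> s)"
proof -
  let ?D = "bregman g gg"
  let ?Q = "\<lambda>z. (M *v z) \<bullet> z"
  have Qneg: "?Q (-z) = ?Q z" for z by (simp add: mvec_neg)
  have id: "(gg u - gg w) \<bullet> (u - w) + 2 * ((gg u - gg w) \<bullet> s)
      = ?D (u+s) w - ?D (u+s) u + ?D (w-s) u - ?D (w-s) w"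
    unfolding bregman_def inner_diff_left inner_diff_right inner_add_left inner_add_right by (simp add: algebra_simps)
  have lo: "\<mu>/2 * (mnorm M (x - y))\<^sup>2 \<le> ?D y x" and up: "?D y x \<le> L/2 * (mnorm M (x - y))\<^sup>2" for x y
    using S unfolding S11_def by auto
  have Qs: "0 \<le> ?Q s" using spd_nonneg[OF M] .
  have "\<mu>/2 * ?Q (w - (u+s)) \<le> ?D (u+s) w" using lo[where x=w and y="u+s"] mnorm_sq[OF M] by simp
  moreover have e: "w - (u+s) = -(u - w + s)" by simp
  ultimately have 1: "\<mu>/2 * ?Q (u - w + s) \<le> ?D (u+s) w" unfolding e Qneg by blast
  have "\<mu>/2 * ?Q (u - (w-s)) \<le> ?D (w-s) u" using lo[where x=u and y="w-s"] mnorm_sq[OF M] by simp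
  moreover have "u - (w-s) = u - w + s" by simp
  ultimately have 2: "\<mu>/2 * ?Q (u - w + s) \<le> ?D (w-s) u" by simp
  have "?D (u+s) u \<le> L/2 * ?Q (u - (u+s))" using up[where x=u and y="u+s"] mnorm_sq[OF M] by simp
  moreover have e: "u - (u+s) = -s" by simp
  ultimately have 3: "?D (u+s) u \<le> L/2 * ?Q s" unfolding e Qneg by blast
  have "?D (w-s) w \<le> L/2 * ?Q (w - (w-s))" using up[where x=w and y="w-s"] mnorm_sq[OF M] by simp
  moreover have "w - (w-s) = s" by simp
  ultimately have 4: "?D (w-s) w \<le> L/2 * ?Q s" by simp
  have "L/2 * ?Q s \<le> 1/2 * ?Q s" using L1 Qs using mult_right_mono[OF L1 Qs] by simp
  then show ?thesis using 1 2 3 4 id by linarith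
qed

lemma quad_scale: "((A::real^'n^'n) *v (c *\<^sub>R z)) \<bullet> (c *\<^sub>R z) = c\<^sup>2 * ((A *v z) \<bullet> z)"
  by (simp add: matrix_vector_mult_scaleR power2_eq_square)

lemma quad_coercive:
  fixes A :: "real^'n^'n"
  assumes pos: "\<And>z. z \<noteq> 0 \<Longrightarrow> 0 < (A *v z) \<bullet> z"
  shows "\<exists>m>0. \<forall>z. m * (norm z)\<^sup>2 \<le> (A *v z) \<bullet> z"
proof -
  let ?S = "sphere (0::real^'n) 1"
  have cont: "continuous_on ?S (\<lambda>z. (A *v z) \<bullet> z)"
    by (intro continuous_intros bounded_linear.continuous_on[OF matrix_vector_mul_bounded_linear])
  obtain z0 where z0: "z0 \<in> ?S" and mn: "\<forall>y\<in>?S. (A *v z0) \<bullet> z0 \<le> (A *v y) \<bullet> y"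
    using continuous_attains_inf[OF compact_sphere _ cont] by auto
  have "z0 \<noteq> 0" using z0 by auto
  then have m0: "0 < (A *v z0) \<bullet> z0" using pos by blast
  have "(A *v z0) \<bullet> z0 * (norm z)\<^sup>2 \<le> (A *v z) \<bullet> z" for z
  proof (cases "z = 0")
    case True then show ?thesis by simp
  next
    case False
    let ?y = "(1 / norm z) *\<^sub>R z"
    have "?y \<in> ?S" using False by (simp add: norm_scaleR)
    then have "(A *v z0) \<bullet> z0 \<le> (A *v ?y) \<bullet> ?y" using mn by blast
    also have "\<dots> = (1 / norm z)\<^sup>2 * ((A *v z) \<bullet> z)" by (rule quad_scale)
    finally have "(A *v z0) \<bullet> z0 \<le> (1 / norm z)\<^sup>2 * ((A *v z) \<bullet> z)" .
    then have "(A *v z0) \<bullet> z0 * (norm z)\<^sup>2 \<le> (1 / norm z)\<^sup>2 * ((A *v z) \<bullet> z) * (norm z)\<^sup>2"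
      by (simp add: mult_right_mono)
    also have "\<dots> = (A *v z) \<bullet> z" using False by (simp add: power2_eq_square field_simps)
    finally show ?thesis .
  qed
  then show ?thesis using m0 by blast
qed

lemma quad_bounded:
  fixes A :: "real^'n^'n"
  shows "\<exists>K>0. \<forall>z. (A *v z) \<bullet> z \<le> K * (norm z)\<^sup>2"
proof -
  obtain K where K: "K > 0" "\<forall>x. norm (A *v x) \<le> norm x * K"
    using bounded_linear.pos_bounded[OF matrix_vector_mul_bounded_linear[of A]] by blast
  have "(A *v z) \<bullet> z \<le> K * (norm z)\<^sup>2" for z
  proof -
    have "(A *v z) \<bullet> z \<le> norm (A *v z) * norm z" by (rule norm_cauchy_schwarz)
    also have "\<dots> \<le> norm z * K * norm z" using K by (simp add: mult_right_mono)
    finally show ?thesis by (simp add: power2_eq_square mult_ac)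
  qed
  then show ?thesis using K by blast
qed

lemma spd_inv_spd: assumes "spd M" shows "spd (matrix_inv M)"
  unfolding spd_def
proof (intro conjI allI impI)
  show "transpose (matrix_inv M) = matrix_inv M" by (rule spd_inv_sym[OF assms])
  fix x :: "real^'a" assume "x \<noteq> 0"
  let ?y = "matrix_inv M *v x"
  have "?y \<noteq> 0" using \<open>x \<noteq> 0\<close> spd_inv_vec(1)[OF assms, of x] by auto
  then have "0 < (M *v ?y) \<bullet> ?y" by (rule spd_pos[OF assms])
  then show "0 < x \<bullet> (matrix_inv M *v x)" using spd_inv_vec(1)[OF assms, of x] by (simp add: inner_commute)
qed

lemma sc_const_attained:
  fixes M :: "real^'n^'n"
  assumes M: "spd M" and c0: "strongly_convex_wrt g gg M c0"
  shows "strongly_convex_wrt g gg M (sc_const g gg M) \<and> c0 \<le> sc_const g gg M"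
proof -
  let ?C = "{c. strongly_convex_wrt g gg M c}"
  obtain z :: "real^'n" where z: "z \<noteq> 0" using one_neq_zero by blast
  have Qz: "0 < (mnorm M (z - 0))\<^sup>2" using spd_pos[OF M z] mnorm_sq[OF M] by simp
  have bdd: "bdd_above ?C"
  proof (rule bdd_aboveI)
    fix c assume "c \<in> ?C"
    then have "c / 2 * (mnorm M (z - 0))\<^sup>2 \<le> bregman g gg 0 z" unfolding strongly_convex_wrt_def by blast
    then show "c \<le> 2 * bregman g gg 0 z / (mnorm M (z - 0))\<^sup>2" using Qz by (simp add: field_simps)
  qed
  have ne: "c0 \<in> ?C" using c0 by simp
  have "sc_const g gg M / 2 * (mnorm M (x - y))\<^sup>2 \<le> bregman g gg y x" for x y
  proof (cases "x = y")
    case True then show ?thesis by (simp add: bregman_def mnorm_def)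
  next
    case False
    have N: "0 < (mnorm M (x - y))\<^sup>2" using spd_pos[OF M, of "x - y"] False mnorm_sq[OF M] by simp
    have "Sup ?C \<le> 2 * bregman g gg y x / (mnorm M (x - y))\<^sup>2"
    proof (rule cSup_least)
      show "?C \<noteq> {}" using ne by blast
      fix c assume "c \<in> ?C"
      then have "c / 2 * (mnorm M (x - y))\<^sup>2 \<le> bregman g gg y x" unfolding strongly_convex_wrt_def by blast
      then show "c \<le> 2 * bregman g gg y x / (mnorm M (x - y))\<^sup>2" using N by (simp add: field_simps)
    qed
    then show ?thesis using N unfolding sc_const_def by (simp add: field_simps)
  qed
  then have "strongly_convex_wrt g gg M (sc_const g gg M)" unfolding strongly_convex_wrt_def by blast
  moreover have "c0 \<le> sc_const g gg M" unfolding sc_const_def using cSup_upper[OF ne bdd] .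
  ultimately show ?thesis by blast
qed

lemma hB_sc:
  fixes B :: "real^'m^'n" and TU :: "real^'m^'m" and IQ :: "real^'n^'n"
  assumes TU: "spd TU" and IQ: "spd IQ" and inj: "inj ((*v) (transpose B))"
    and Dh: "\<And>x y. 0 \<le> bregman h gh y x"
  shows "\<exists>c>0. strongly_convex_wrt (\<lambda>p. h p + (1/2) * (((B ** matrix_inv TU ** transpose B) *v p) \<bullet> p))
                  (\<lambda>p. gh p + (B ** matrix_inv TU ** transpose B) *v p) IQ c"
proof -
  let ?R = "B ** matrix_inv TU ** transpose B"
  let ?Ti = "matrix_inv TU"
  have Rv: "?R *v z = B *v (?Ti *v (transpose B *v z))" for z
    by (simp only: matrix_vector_mul_assoc matrix_mul_assoc)
  have QR: "(?R *v z) \<bullet> z = (?Ti *v (transpose B *v z)) \<bullet> (transpose B *v z)" for z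
    unfolding Rv inner_mat_left ..
  have Rsym: "(?R *v x) \<bullet> y = (?R *v y) \<bullet> x" for x y
  proof -
    have "(?R *v x) \<bullet> y = (?Ti *v (transpose B *v x)) \<bullet> (transpose B *v y)"
      unfolding Rv inner_mat_left ..
    also have "\<dots> = (transpose B *v x) \<bullet> (?Ti *v (transpose B *v y))"
      by (rule spd_inv_inner_sym[OF TU])
    also have "\<dots> = (?Ti *v (transpose B *v y)) \<bullet> (transpose B *v x)" by (rule inner_commute)
    also have "\<dots> = (?R *v y) \<bullet> x" unfolding Rv inner_mat_left ..
    finally show ?thesis .
  qed
  have Rpos: "0 < (?R *v z) \<bullet> z" if "z \<noteq> 0" for z
  proof -
    have "transpose B *v z \<noteq> 0"
    proof
      assume "transpose B *v z = 0"
      then have "transpose B *v z = transpose B *v 0" by simp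
      then show False using inj that by (meson injD)
    qed
    then show ?thesis unfolding QR using spd_pos[OF spd_inv_spd[OF TU]] by blast
  qed
  obtain m where m: "m > 0" "\<forall>z. m * (norm z)\<^sup>2 \<le> (?R *v z) \<bullet> z"
    using quad_coercive[of ?R] Rpos by blast
  obtain K where K: "K > 0" "\<forall>z. (IQ *v z) \<bullet> z \<le> K * (norm z)\<^sup>2"
    using quad_bounded[of IQ] by blast
  let ?c = "m / K"
  have "?c / 2 * (mnorm IQ (x - y))\<^sup>2 \<le> bregman (\<lambda>p. h p + (1/2) * ((?R *v p) \<bullet> p)) (\<lambda>p. gh p + ?R *v p) y x" for x y
  proof -
    have id: "bregman (\<lambda>p. h p + (1/2) * ((?R *v p) \<bullet> p)) (\<lambda>p. gh p + ?R *v p) y x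
        = bregman h gh y x + 1/2 * ((?R *v (x - y)) \<bullet> (x - y))"
      using Rsym[of x y]
      unfolding bregman_def matrix_vector_mult_diff_distrib inner_diff_left inner_diff_right inner_add_left
      by (simp add: algebra_simps)
    have "?c / 2 * (mnorm IQ (x - y))\<^sup>2 = ?c / 2 * ((IQ *v (x - y)) \<bullet> (x - y))" using mnorm_sq[OF IQ] by simp
    also have "\<dots> \<le> ?c / 2 * (K * (norm (x - y))\<^sup>2)"
      using K m by (intro mult_left_mono) auto
    also have "\<dots> = m / 2 * (norm (x - y))\<^sup>2" using K by simp
    also have "\<dots> \<le> 1/2 * ((?R *v (x - y)) \<bullet> (x - y))" using m by auto
    also have "\<dots> \<le> bregman h gh y x + 1/2 * ((?R *v (x - y)) \<bullet> (x - y))" using Dh by simp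
    finally show ?thesis unfolding id .
  qed
  then show ?thesis unfolding strongly_convex_wrt_def using m K by (intro exI[of _ ?c]) auto
qed

declare transpose_matrix_vector[simp del]

lemma inner_mat_right: "x \<bullet> (B *v y) = (transpose B *v x) \<bullet> (y::real^'m)"
  for B :: "real^'m^'n"
  using inner_mat_left[of "transpose B" x y] by simp

lemma sc_sym:
  assumes M: "spd M" and S: "strongly_convex_wrt g gg M c"
  shows "c * ((M *v (x - y)) \<bullet> (x - y)) \<le> (gg x - gg y) \<bullet> (x - y)"
proof -
  have 1: "c/2 * (mnorm M (y - x))\<^sup>2 \<le> bregman g gg x y"
   and 2: "c/2 * (mnorm M (x - y))\<^sup>2 \<le> bregman g gg y x"
    using S unfolding strongly_convex_wrt_def by auto
  have e: "y - x = -(x - y)" by simp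
  have q1: "(mnorm M (y - x))\<^sup>2 = (M *v (x - y)) \<bullet> (x - y)"
    unfolding e mnorm_sq[OF M] mvec_neg by (simp only: inner_minus_left inner_minus_right minus_minus)
  have q2: "(mnorm M (x - y))\<^sup>2 = (M *v (x - y)) \<bullet> (x - y)" using mnorm_sq[OF M] by simp
  have 3: "c/2 * ((M *v (x - y)) \<bullet> (x - y)) \<le> bregman g gg x y" using 1 unfolding q1 .
  have 4: "c/2 * ((M *v (x - y)) \<bullet> (x - y)) \<le> bregman g gg y x" using 2 unfolding q2 .
  show ?thesis using 3 4 bregman_sym[of g gg x y] by linarith
qed

lemma main_ineq:
  fixes B :: "real^'m^'n"
    and f :: "real^'m \<Rightarrow> real" and gf :: "real^'m \<Rightarrow> real^'m"
    and h :: "real^'n \<Rightarrow> real" and gh :: "real^'n \<Rightarrow> real^'n"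
    and us :: "real^'m" and ps :: "real^'n"
    and TU IV :: "real^'m^'m" and TP IQ :: "real^'n^'n"
    and muf Lf muh Lh mufB c :: real
  assumes saddle_u: "gf us + transpose B *v ps = 0"
    and saddle_p: "B *v us - gh ps = 0"
    and spd_TU: "spd TU" and spd_IV: "spd IV" and spd_TP: "spd TP" and spd_IQ: "spd IQ"
    and h_S11: "S11 h gh TP muh Lh" and Lh1: "Lh \<le> 1"
    and f_S11: "S11 f gf TU muf Lf" and Lf1: "Lf \<le> 1"
    and fB_sc: "strongly_convex_wrt
                  (\<lambda>u. f u + (1/2) * (((transpose B ** matrix_inv TP ** B) *v u) \<bullet> u))
                  (\<lambda>u. gf u + (transpose B ** matrix_inv TP ** B) *v u) IV mufB"
    and hB_sc: "strongly_convex_wrt (\<lambda>p. h p + (1/2) * (((B ** matrix_inv TU ** transpose B) *v p) \<bullet> p))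
                  (\<lambda>p. gh p + (B ** matrix_inv TU ** transpose B) *v p) IQ c"
  shows "- ((IV *v (u - us)) \<bullet> (- (matrix_inv IV *v ((gf u + transpose B *v p) + transpose B *v (matrix_inv TP *v (B *v u - gh p)))))
             + (IQ *v (p - ps)) \<bullet> (matrix_inv IQ *v ((B *v u - gh p) - B *v (matrix_inv TU *v (gf u + transpose B *v p)))))
         \<ge> min mufB c * ((1/2) * (mnorm IV (u - us))\<^sup>2 + (1/2) * (mnorm IQ (p - ps))\<^sup>2)
            + muf / 2 * (mnorm TU ((u + matrix_inv TU *v (transpose B *v p)) - (us + matrix_inv TU *v (transpose B *v ps))))\<^sup>2
            + muh / 2 * (mnorm TP ((p - matrix_inv TP *v (B *v u)) - (ps - matrix_inv TP *v (B *v us))))\<^sup>2"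
proof -
  define Bt where "Bt = transpose B"
  define TUi where "TUi = matrix_inv TU"
  define TPi where "TPi = matrix_inv TP"
  define \<xi> where "\<xi> = u - us"
  define \<eta> where "\<eta> = p - ps"
  define a where "a = gf u - gf us"
  define b where "b = gh p - gh ps"
  define s where "s = TUi *v (Bt *v \<eta>)"
  define t where "t = TPi *v (B *v \<xi>)"
  have dLu: "gf u + transpose B *v p = a + Bt *v \<eta>"
    using saddle_u unfolding a_def Bt_def \<eta>_def matrix_vector_mult_diff_distrib
    by (simp add: algebra_simps eq_neg_iff_add_eq_0)
  have dLp: "B *v u - gh p = B *v \<xi> - b"
    using saddle_p unfolding b_def \<xi>_def matrix_vector_mult_diff_distrib
    by (simp add: algebra_simps)
  have vd: "(u + matrix_inv TU *v (transpose B *v p)) - (us + matrix_inv TU *v (transpose B *v ps)) = \<xi> + s"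
    unfolding s_def \<xi>_def \<eta>_def TUi_def Bt_def matrix_vector_mult_diff_distrib by simp
  have qd: "(p - matrix_inv TP *v (B *v u)) - (ps - matrix_inv TP *v (B *v us)) = \<eta> + - t"
    unfolding t_def \<xi>_def \<eta>_def TPi_def matrix_vector_mult_diff_distrib by simp
  have LHS: "- ((IV *v (u - us)) \<bullet> (- (matrix_inv IV *v ((gf u + transpose B *v p) + transpose B *v (matrix_inv TP *v (B *v u - gh p)))))
             + (IQ *v (p - ps)) \<bullet> (matrix_inv IQ *v ((B *v u - gh p) - B *v (matrix_inv TU *v (gf u + transpose B *v p)))))
       = \<xi> \<bullet> (a + Bt *v \<eta> + Bt *v (TPi *v (B *v \<xi> - b))) - \<eta> \<bullet> (B *v \<xi> - b - B *v (TUi *v (a + Bt *v \<eta>)))"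
    unfolding dLu dLp inner_minus_right spd_cancel[OF spd_IV] spd_cancel[OF spd_IQ]
    unfolding \<xi>_def[symmetric] \<eta>_def[symmetric] TUi_def[symmetric] TPi_def[symmetric] Bt_def[symmetric]
    by simp
  have e1: "\<xi> \<bullet> (Bt *v \<eta>) = \<eta> \<bullet> (B *v \<xi>)" unfolding Bt_def inner_mat_left[symmetric] by (rule inner_commute)
  have e2: "\<xi> \<bullet> (Bt *v t) = (B *v \<xi>) \<bullet> t" unfolding Bt_def inner_mat_left ..
  have e3: "\<xi> \<bullet> (Bt *v (TPi *v b)) = t \<bullet> b"
    unfolding Bt_def t_def inner_mat_left[symmetric] TPi_def spd_inv_inner_sym[OF spd_TP] ..
  have e4: "\<eta> \<bullet> (B *v (TUi *v a)) = s \<bullet> a"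
    unfolding Bt_def s_def inner_mat_right TUi_def spd_inv_inner_sym[OF spd_TU] ..
  have e5: "\<eta> \<bullet> (B *v s) = (Bt *v \<eta>) \<bullet> s"
    unfolding Bt_def inner_mat_right ..
  have L2: "\<xi> \<bullet> (a + Bt *v \<eta> + Bt *v (TPi *v (B *v \<xi> - b))) - \<eta> \<bullet> (B *v \<xi> - b - B *v (TUi *v (a + Bt *v \<eta>)))
     = \<xi> \<bullet> a + (B *v \<xi>) \<bullet> t - t \<bullet> b + \<eta> \<bullet> b + s \<bullet> a + (Bt *v \<eta>) \<bullet> s"
    unfolding matrix_vector_mult_diff_distrib matrix_vector_right_distrib inner_add_right inner_diff_right
    unfolding t_def[symmetric] s_def[symmetric]
    using e1 e2 e3 e4 e5 by (simp add: inner_commute)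
  have F1: "mufB * ((IV *v \<xi>) \<bullet> \<xi>) \<le> \<xi> \<bullet> a + (B *v \<xi>) \<bullet> t"
  proof -
    have "mufB * ((IV *v \<xi>) \<bullet> \<xi>) \<le> (a + Bt *v t) \<bullet> \<xi>"
      using sc_sym[OF spd_IV fB_sc, of u us]
      unfolding \<xi>_def[symmetric] a_def[symmetric]
      unfolding t_def \<xi>_def Bt_def TPi_def a_def
      by (simp add: matrix_vector_mul_assoc matrix_mul_assoc matrix_vector_mult_diff_distrib algebra_simps)
    also have "\<dots> = \<xi> \<bullet> a + (B *v \<xi>) \<bullet> t" using e2 by (simp add: inner_add_left inner_add_right inner_commute)
    finally show ?thesis .
  qed
  have F2: "c * ((IQ *v \<eta>) \<bullet> \<eta>) \<le> \<eta> \<bullet> b + (Bt *v \<eta>) \<bullet> s"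
  proof -
    have "c * ((IQ *v \<eta>) \<bullet> \<eta>) \<le> (b + B *v s) \<bullet> \<eta>"
      using sc_sym[OF spd_IQ hB_sc, of p ps]
      unfolding s_def \<eta>_def Bt_def TUi_def b_def
      by (simp add: matrix_vector_mul_assoc matrix_mul_assoc matrix_vector_mult_diff_distrib algebra_simps)
    also have "\<dots> = \<eta> \<bullet> b + (Bt *v \<eta>) \<bullet> s" using e5 by (simp add: inner_add_left inner_add_right inner_commute)
    finally show ?thesis .
  qed
  have F3: "muf/2 * ((TU *v (\<xi> + s)) \<bullet> (\<xi> + s)) \<le> 1/2 * (a \<bullet> \<xi>) + a \<bullet> s + 1/2 * ((Bt *v \<eta>) \<bullet> s)"
  proof -
    have "TU *v s = Bt *v \<eta>" unfolding s_def TUi_def by (rule spd_inv_vec(1)[OF spd_TU])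
    then show ?thesis using key_part[OF spd_TU f_S11 Lf1, of u us s]
      unfolding \<xi>_def a_def by simp
  qed
  have F4: "muh/2 * ((TP *v (\<eta> + - t)) \<bullet> (\<eta> + - t)) \<le> 1/2 * (b \<bullet> \<eta>) + b \<bullet> (- t) + 1/2 * ((B *v \<xi>) \<bullet> t)"
  proof -
    have "TP *v t = B *v \<xi>" unfolding t_def TPi_def by (rule spd_inv_vec(1)[OF spd_TP])
    then have "(TP *v (- t)) \<bullet> (- t) = (B *v \<xi>) \<bullet> t" by (simp add: mvec_neg)
    then show ?thesis using key_part[OF spd_TP h_S11 Lh1, of p ps "- t"]
      unfolding \<eta>_def b_def by simp
  qed
  have Q1: "0 \<le> (IV *v \<xi>) \<bullet> \<xi>" by (rule spd_nonneg[OF spd_IV])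
  have Q2: "0 \<le> (IQ *v \<eta>) \<bullet> \<eta>" by (rule spd_nonneg[OF spd_IQ])
  have M: "min mufB c * ((1/2) * ((IV *v \<xi>) \<bullet> \<xi>) + (1/2) * ((IQ *v \<eta>) \<bullet> \<eta>))
      \<le> 1/2 * (mufB * ((IV *v \<xi>) \<bullet> \<xi>)) + 1/2 * (c * ((IQ *v \<eta>) \<bullet> \<eta>))"
  proof -
    have "min mufB c * ((IV *v \<xi>) \<bullet> \<xi>) \<le> mufB * ((IV *v \<xi>) \<bullet> \<xi>)" using Q1 by (simp add: mult_right_mono)
    moreover have "min mufB c * ((IQ *v \<eta>) \<bullet> \<eta>) \<le> c * ((IQ *v \<eta>) \<bullet> \<eta>)" using Q2 by (simp add: mult_right_mono)
    ultimately show ?thesis by (simp add: algebra_simps)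
  qed
  show ?thesis
    unfolding LHS L2 vd qd mnorm_sq[OF spd_IV] mnorm_sq[OF spd_IQ] mnorm_sq[OF spd_TU] mnorm_sq[OF spd_TP]
    unfolding \<xi>_def[symmetric] \<eta>_def[symmetric]
    using F1 F2 F3 F4 M by (simp add: inner_commute inner_minus_right)
qed

lemma quad_deriv:
  fixes w :: "real \<Rightarrow> real^'m" and M :: "real^'m^'m"
  assumes M: "spd M" and d: "(w has_vector_derivative w') (at s within S)"
  shows "((\<lambda>s. (1/2) * ((M *v w s) \<bullet> w s)) has_real_derivative ((M *v w s) \<bullet> w')) (at s within S)"
proof -
  have d2: "((\<lambda>s. M *v w s) has_vector_derivative M *v w') (at s within S)"
    by (rule bounded_linear.has_vector_derivative[OF matrix_vector_mul_bounded_linear d])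
  have d3: "((\<lambda>s. (M *v w s) \<bullet> w s) has_vector_derivative ((M *v w s) \<bullet> w' + (M *v w') \<bullet> w s)) (at s within S)"
    by (rule bounded_bilinear.has_vector_derivative[OF bounded_bilinear_inner d2 d])
  have "(M *v w') \<bullet> w s = (M *v w s) \<bullet> w'" using spd_inner_sym[OF M] by (simp add: inner_commute)
  then have "((\<lambda>s. (M *v w s) \<bullet> w s) has_real_derivative (2 * ((M *v w s) \<bullet> w'))) (at s within S)"
    using d3 unfolding has_real_derivative_iff_has_vector_derivative by simp
  from DERIV_cmult[OF this, of "1/2"] show ?thesis by simp
qed

lemma ode_decay:
  fixes uu :: "real \<Rightarrow> real^'m" and pp :: "real \<Rightarrow> real^'n"
    and Gu :: "real^'m \<Rightarrow> real^'n \<Rightarrow> real^'m" and Gp :: "real^'m \<Rightarrow> real^'n \<Rightarrow> real^'n"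
    and IV :: "real^'m^'m" and IQ :: "real^'n^'n"
  assumes IV: "spd IV" and IQ: "spd IQ"
    and der: "\<forall>t\<ge>0. (uu has_vector_derivative Gu (uu t) (pp t)) (at t within {0..}) \<and>
                    (pp has_vector_derivative Gp (uu t) (pp t)) (at t within {0..})"
    and ineq: "\<forall>u p. (IV *v (u - us)) \<bullet> Gu u p + (IQ *v (p - ps)) \<bullet> Gp u p
        \<le> - mu * ((1/2) * (mnorm IV (u - us))\<^sup>2 + (1/2) * (mnorm IQ (p - ps))\<^sup>2)"
    and t: "t > 0"
  shows "(1/2) * (mnorm IV (uu t - us))\<^sup>2 + (1/2) * (mnorm IQ (pp t - ps))\<^sup>2
     \<le> exp (- mu * t) * ((1/2) * (mnorm IV (uu 0 - us))\<^sup>2 + (1/2) * (mnorm IQ (pp 0 - ps))\<^sup>2)"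
proof -
  define Ef where "Ef s = (1/2) * ((IV *v (uu s - us)) \<bullet> (uu s - us)) + (1/2) * ((IQ *v (pp s - ps)) \<bullet> (pp s - ps))" for s
  have EE: "(1/2) * (mnorm IV (uu s - us))\<^sup>2 + (1/2) * (mnorm IQ (pp s - ps))\<^sup>2 = Ef s" for s
    unfolding Ef_def mnorm_sq[OF IV] mnorm_sq[OF IQ] ..
  define D where "D s = (IV *v (uu s - us)) \<bullet> Gu (uu s) (pp s) + (IQ *v (pp s - ps)) \<bullet> Gp (uu s) (pp s)" for s
  have dE: "(Ef has_real_derivative D s) (at s within {0..})" if "s \<ge> 0" for s
  proof -
    have du: "((\<lambda>s. uu s - us) has_vector_derivative Gu (uu s) (pp s)) (at s within {0..})"
      using has_vector_derivative_diff[OF conjunct1[OF der[rule_format, OF that]] has_vector_derivative_const] by simp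
    have dp: "((\<lambda>s. pp s - ps) has_vector_derivative Gp (uu s) (pp s)) (at s within {0..})"
      using has_vector_derivative_diff[OF conjunct2[OF der[rule_format, OF that]] has_vector_derivative_const] by simp
    show ?thesis
      unfolding Ef_def[abs_def] D_def
      by (rule DERIV_add[OF quad_deriv[OF IV du] quad_deriv[OF IQ dp]])
  qed
  define \<phi> where "\<phi> s = exp (mu * s) * Ef s" for s
  have dphi: "(\<phi> has_real_derivative (exp (mu * s) * mu * Ef s + exp (mu * s) * D s)) (at s within {0..})"
    if "s \<ge> 0" for s
  proof -
    have "((\<lambda>s. exp (mu * s)) has_real_derivative exp (mu * s) * mu) (at s within {0..})"
      by (auto intro!: derivative_eq_intros)
    from DERIV_mult[OF this dE[OF that]] show ?thesis unfolding \<phi>_def[abs_def] by (simp add: mult.commute)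
  qed
  have nonpos: "exp (mu * s) * mu * Ef s + exp (mu * s) * D s \<le> 0" for s
  proof -
    have "D s \<le> - mu * Ef s" using ineq[rule_format, of "uu s" "pp s"] unfolding D_def EE .
    then have "exp (mu * s) * D s \<le> exp (mu * s) * (- mu * Ef s)" using mult_left_mono[of "D s" "- mu * Ef s" "exp (mu * s)"] by simp
    then show ?thesis by (simp add: algebra_simps)
  qed
  have "\<phi> t \<le> \<phi> 0"
  proof (rule DERIV_nonpos_imp_decreasing_open[of 0 t])
    show "0 \<le> t" using t by simp
    fix x assume x: "0 < x" "x < t"
    have "at x within {0..} = at x" by (rule at_within_interior) (use x in simp)
    then show "\<exists>y. (\<phi> has_real_derivative y) (at x) \<and> y \<le> 0"
      using dphi[of x] x nonpos[of x] by auto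
  next
    show "continuous_on {0..t} \<phi>"
      unfolding continuous_on_eq_continuous_within
    proof
      fix x assume x: "x \<in> {0..t}"
      have "continuous (at x within {0..}) \<phi>" using DERIV_continuous[OF dphi[of x]] x by simp
      then show "continuous (at x within {0..t}) \<phi>" by (rule continuous_within_subset) auto
    qed
  qed
  then have "exp (mu * t) * Ef t \<le> Ef 0" unfolding \<phi>_def by simp
  then have "exp (- mu * t) * (exp (mu * t) * Ef t) \<le> exp (- mu * t) * Ef 0" by (simp add: mult_left_mono)
  then have "Ef t \<le> exp (- mu * t) * Ef 0" by (simp add: exp_minus field_simps)
  then show ?thesis unfolding EE .
qed

theorem theorem5p3:
  fixes B :: "real^'m^'n"
    and f :: "real^'m \<Rightarrow> real" and gf :: "real^'m \<Rightarrow> real^'m"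
    and h :: "real^'n \<Rightarrow> real" and gh :: "real^'n \<Rightarrow> real^'n"
    and us :: "real^'m" and ps :: "real^'n"
    and TU IV :: "real^'m^'m" and TP IQ :: "real^'n^'n"
    and muf Lf muh Lh mufB :: real
  assumes mn: "CARD('n) \<le> CARD('m)"
    and rank: "rank B = CARD('n)"
    and f_conv: "convex_on UNIV f"
    and f_diff: "\<And>u. (f has_derivative (\<lambda>d. gf u \<bullet> d)) (at u)"
    and f_C1: "continuous_on UNIV gf"
    and f_lip: "\<exists>K. K-lipschitz_on UNIV gf"
    and h_conv: "convex_on UNIV h"
    and h_diff: "\<And>p. (h has_derivative (\<lambda>d. gh p \<bullet> d)) (at p)"
    and h_C1: "continuous_on UNIV gh"
    and h_lip: "\<exists>K. K-lipschitz_on UNIV gh"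
    and saddle_u: "gf us + transpose B *v ps = 0"
    and saddle_p: "B *v us - gh ps = 0"
    and spd_TU: "spd TU" and spd_IV: "spd IV" and spd_TP: "spd TP" and spd_IQ: "spd IQ"
    and h_S11: "S11 h gh TP muh Lh" and Lh1: "Lh \<le> 1"
    and f_S11: "S11 f gf TU muf Lf" and Lf1: "Lf \<le> 1"
    and fB_sc: "strongly_convex_wrt
                  (\<lambda>u. f u + (1/2) * (((transpose B ** matrix_inv TP ** B) *v u) \<bullet> u))
                  (\<lambda>u. gf u + (transpose B ** matrix_inv TP ** B) *v u) IV mufB"
    and mufB_pos: "mufB > 0"
  shows
    "let dLu = (\<lambda>u p. gf u + transpose B *v p);
         dLp = (\<lambda>u p. B *v u - gh p);
         Gu = (\<lambda>u p. - (matrix_inv IV *v (dLu u p + transpose B *v (matrix_inv TP *v dLp u p))));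
         Gp = (\<lambda>u p. matrix_inv IQ *v (dLp u p - B *v (matrix_inv TU *v dLu u p)));
         E = (\<lambda>u p. (1/2) * (mnorm IV (u - us))\<^sup>2 + (1/2) * (mnorm IQ (p - ps))\<^sup>2);
         muhB = sc_const (\<lambda>p. h p + (1/2) * (((B ** matrix_inv TU ** transpose B) *v p) \<bullet> p))
                  (\<lambda>p. gh p + (B ** matrix_inv TU ** transpose B) *v p) IQ;
         mu = min mufB muhB;
         v = (\<lambda>u p. u + matrix_inv TU *v (transpose B *v p));
         q = (\<lambda>u p. p - matrix_inv TP *v (B *v u))
     in 0 < mu \<and>
        (\<forall>u p. - ((IV *v (u - us)) \<bullet> Gu u p + (IQ *v (p - ps)) \<bullet> Gp u p)
                 \<ge> mu * E u p + muf / 2 * (mnorm TU (v u p - v us ps))\<^sup>2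
                    + muh / 2 * (mnorm TP (q u p - q us ps))\<^sup>2) \<and>
        (\<forall>(uu :: real \<Rightarrow> real^'m) (pp :: real \<Rightarrow> real^'n).
            (\<forall>t\<ge>0. (uu has_vector_derivative Gu (uu t) (pp t)) (at t within {0..}) \<and>
                    (pp has_vector_derivative Gp (uu t) (pp t)) (at t within {0..}))
            \<longrightarrow> (\<forall>t>0. E (uu t) (pp t) \<le> exp (- mu * t) * E (uu 0) (pp 0)))"
proof -
  have muf0: "0 \<le> muf" using f_S11 unfolding S11_def by blast
  have muh0: "0 \<le> muh" using h_S11 unfolding S11_def by blast
  have inj: "inj ((*v) (transpose B))"
    using full_rank_injective[of "transpose B"] rank rank_transpose[of B] by simp
  have Dh: "0 \<le> bregman h gh y x" for x y
  proof -
    have "muh / 2 * (mnorm TP (x - y))\<^sup>2 \<le> bregman h gh y x" using h_S11 unfolding S11_def by blast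
    moreover have "0 \<le> muh / 2 * (mnorm TP (x - y))\<^sup>2" using muh0 by simp
    ultimately show ?thesis by linarith
  qed
  obtain c0 where c0: "c0 > 0" and c0sc: "strongly_convex_wrt (\<lambda>p. h p + (1/2) * (((B ** matrix_inv TU ** transpose B) *v p) \<bullet> p))
                  (\<lambda>p. gh p + (B ** matrix_inv TU ** transpose B) *v p) IQ c0"
    using hB_sc[OF spd_TU spd_IQ inj Dh] by blast
  define c where "c = sc_const (\<lambda>p. h p + (1/2) * (((B ** matrix_inv TU ** transpose B) *v p) \<bullet> p))
                  (\<lambda>p. gh p + (B ** matrix_inv TU ** transpose B) *v p) IQ"
  have csc: "strongly_convex_wrt (\<lambda>p. h p + (1/2) * (((B ** matrix_inv TU ** transpose B) *v p) \<bullet> p))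
                  (\<lambda>p. gh p + (B ** matrix_inv TU ** transpose B) *v p) IQ c" and "c0 \<le> c"
    using sc_const_attained[OF spd_IQ c0sc] unfolding c_def by auto
  then have cpos: "0 < c" using c0 by simp
  have pos: "0 < min mufB c" using cpos mufB_pos by simp
  have ineq: "\<forall>u p. - ((IV *v (u - us)) \<bullet> (- (matrix_inv IV *v ((gf u + transpose B *v p) + transpose B *v (matrix_inv TP *v (B *v u - gh p)))))
             + (IQ *v (p - ps)) \<bullet> (matrix_inv IQ *v ((B *v u - gh p) - B *v (matrix_inv TU *v (gf u + transpose B *v p)))))
         \<ge> min mufB c * ((1/2) * (mnorm IV (u - us))\<^sup>2 + (1/2) * (mnorm IQ (p - ps))\<^sup>2)
            + muf / 2 * (mnorm TU ((u + matrix_inv TU *v (transpose B *v p)) - (us + matrix_inv TU *v (transpose B *v ps))))\<^sup>2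
            + muh / 2 * (mnorm TP ((p - matrix_inv TP *v (B *v u)) - (ps - matrix_inv TP *v (B *v us))))\<^sup>2"
    using main_ineq[OF saddle_u saddle_p spd_TU spd_IV spd_TP spd_IQ h_S11 Lh1 f_S11 Lf1 fB_sc csc] by blast
  have ineq2: "\<forall>u p. (IV *v (u - us)) \<bullet> (- (matrix_inv IV *v ((gf u + transpose B *v p) + transpose B *v (matrix_inv TP *v (B *v u - gh p)))))
             + (IQ *v (p - ps)) \<bullet> (matrix_inv IQ *v ((B *v u - gh p) - B *v (matrix_inv TU *v (gf u + transpose B *v p))))
         \<le> - min mufB c * ((1/2) * (mnorm IV (u - us))\<^sup>2 + (1/2) * (mnorm IQ (p - ps))\<^sup>2)"
  proof (intro allI)
    fix u p
    have "0 \<le> muf / 2 * (mnorm TU ((u + matrix_inv TU *v (transpose B *v p)) - (us + matrix_inv TU *v (transpose B *v ps))))\<^sup>2"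
      using muf0 by simp
    moreover have "0 \<le> muh / 2 * (mnorm TP ((p - matrix_inv TP *v (B *v u)) - (ps - matrix_inv TP *v (B *v us))))\<^sup>2"
      using muh0 by simp
    ultimately show "(IV *v (u - us)) \<bullet> (- (matrix_inv IV *v ((gf u + transpose B *v p) + transpose B *v (matrix_inv TP *v (B *v u - gh p)))))
             + (IQ *v (p - ps)) \<bullet> (matrix_inv IQ *v ((B *v u - gh p) - B *v (matrix_inv TU *v (gf u + transpose B *v p))))
         \<le> - min mufB c * ((1/2) * (mnorm IV (u - us))\<^sup>2 + (1/2) * (mnorm IQ (p - ps))\<^sup>2)"
      using ineq[rule_format, of u p] by linarith
  qed
  show ?thesis
    unfolding Let_def c_def[symmetric]
  proof (intro conjI allI impI)
    show "0 < min mufB c" by (rule pos)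
  next
    fix u p
    show "- ((IV *v (u - us)) \<bullet> (- (matrix_inv IV *v ((gf u + transpose B *v p) + transpose B *v (matrix_inv TP *v (B *v u - gh p)))))
             + (IQ *v (p - ps)) \<bullet> (matrix_inv IQ *v ((B *v u - gh p) - B *v (matrix_inv TU *v (gf u + transpose B *v p)))))
         \<ge> min mufB c * ((1/2) * (mnorm IV (u - us))\<^sup>2 + (1/2) * (mnorm IQ (p - ps))\<^sup>2)
            + muf / 2 * (mnorm TU ((u + matrix_inv TU *v (transpose B *v p)) - (us + matrix_inv TU *v (transpose B *v ps))))\<^sup>2
            + muh / 2 * (mnorm TP ((p - matrix_inv TP *v (B *v u)) - (ps - matrix_inv TP *v (B *v us))))\<^sup>2"
      using ineq by blast
  next
    fix uu :: "real \<Rightarrow> real^'m" and pp :: "real \<Rightarrow> real^'n" and t :: real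
    assume der: "\<forall>t\<ge>0. (uu has_vector_derivative - (matrix_inv IV *v ((gf (uu t) + transpose B *v pp t) + transpose B *v (matrix_inv TP *v (B *v uu t - gh (pp t)))))) (at t within {0..}) \<and>
                    (pp has_vector_derivative matrix_inv IQ *v ((B *v uu t - gh (pp t)) - B *v (matrix_inv TU *v (gf (uu t) + transpose B *v pp t)))) (at t within {0..})"
      and t: "t > 0"
    show "(1/2) * (mnorm IV (uu t - us))\<^sup>2 + (1/2) * (mnorm IQ (pp t - ps))\<^sup>2
     \<le> exp (- min mufB c * t) * ((1/2) * (mnorm IV (uu 0 - us))\<^sup>2 + (1/2) * (mnorm IQ (pp 0 - ps))\<^sup>2)"
      by (rule ode_decay[OF spd_IV spd_IQ _ _ t,
          where Gu = "\<lambda>u p. - (matrix_inv IV *v ((gf u + transpose B *v p) + transpose B *v (matrix_inv TP *v (B *v u - gh p))))"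
            and Gp = "\<lambda>u p. matrix_inv IQ *v ((B *v u - gh p) - B *v (matrix_inv TU *v (gf u + transpose B *v p)))"])
         (use der ineq2 in simp_all)
  qed
qed

end
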